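(* Let $(P,\preceq)$ be a poset and $\mathcal{X}:=\{X\subseteq P\mid (X,\preceq)\text{ is well-ordered}\}$. Let $f:\mathcal{X}\to\mathcal{X}$ satisfy: for all $X,X'\in\mathcal{X}$ and all $y\in f(X)\mathbin{\triangle}f(X')$ there exists $x\in X\mathbin{\triangle}X'$ with $x\prec y$. Then $f$ has a unique fixed point. Moreover, this fixed point equals $X_{\hat\alpha}$ for some ordinal $\hat\alpha$, where $X_0=\emptyset$; for every ordinal $\alpha$, $X_{\alpha+1}=X_\alpha$ if $f(X_\alpha)\setminus X_\alpha=\emptyset$ and $X_{\alpha+1}=X_\alpha\cup\{\min(f(X_\alpha)\setminus X_\alpha)\}$ otherwise; and for nonzero limit ordinals $\alpha$, $X_\alpha=\bigcup_{\beta<\alpha}X_\beta$.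
   Context: $X\mathbin{\triangle}Y=(X\setminus Y)\cup(Y\setminus X)$ is the symmetric difference. $x\prec y$ means $x\preceq y$ and $x\neq y$. A poset is well-ordered if every nonempty subset has a least element. *)

theory Defs
  imports Main
begin

definition partial_order_on_set :: "'a set \<Rightarrow> ('a \<Rightarrow> 'a \<Rightarrow> bool) \<Rightarrow> bool" where
  "partial_order_on_set P le \<longleftrightarrow>
     (\<forall>x\<in>P. le x x) \<and>
     (\<forall>x\<in>P. \<forall>y\<in>P. le x y \<and> le y x \<longrightarrow> x = y) \<and>
     (\<forall>x\<in>P. \<forall>y\<in>P. \<forall>z\<in>P. le x y \<and> le y z \<longrightarrow> le x z)"

definition strict :: "('a \<Rightarrow> 'a \<Rightarrow> bool) \<Rightarrow> 'a \<Rightarrow> 'a \<Rightarrow> bool" where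
  "strict le x y \<longleftrightarrow> le x y \<and> x \<noteq> y"

definition is_least :: "('a \<Rightarrow> 'a \<Rightarrow> bool) \<Rightarrow> 'a set \<Rightarrow> 'a \<Rightarrow> bool" where
  "is_least le S m \<longleftrightarrow> m \<in> S \<and> (\<forall>z\<in>S. le m z)"

definition least :: "('a \<Rightarrow> 'a \<Rightarrow> bool) \<Rightarrow> 'a set \<Rightarrow> 'a" where
  "least le S = (THE m. is_least le S m)"

definition well_ordered_subset :: "'a set \<Rightarrow> ('a \<Rightarrow> 'a \<Rightarrow> bool) \<Rightarrow> 'a set \<Rightarrow> bool" where
  "well_ordered_subset P le X \<longleftrightarrow>
     X \<subseteq> P \<and> (\<forall>S. S \<subseteq> X \<and> S \<noteq> {} \<longrightarrow> (\<exists>m. is_least le S m))"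

definition WO_sets :: "'a set \<Rightarrow> ('a \<Rightarrow> 'a \<Rightarrow> bool) \<Rightarrow> 'a set set" where
  "WO_sets P le = {X. well_ordered_subset P le X}"

definition symdiff :: "'a set \<Rightarrow> 'a set \<Rightarrow> 'a set" where
  "symdiff X Y = (X - Y) \<union> (Y - X)"

text \<open>The transfinite iteration X_\<alpha>, indexed along a well-order r (standing for the
  ordinals below its order type): X at the r-least index is empty; at the successor of
  \<beta> (an index \<alpha> whose strict predecessors are exactly the indices \<le> \<beta>) it follows the
  successor rule; at nonzero limit indices it is the union of all earlier stages.\<close>
definition is_iteration ::
  "('a \<Rightarrow> 'a \<Rightarrow> bool) \<Rightarrow> ('a set \<Rightarrow> 'a set) \<Rightarrow> 'i rel \<Rightarrow> ('i \<Rightarrow> 'a set) \<Rightarrow> bool" where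
  "is_iteration le f r X \<longleftrightarrow>
     Well_order r \<and>
     (\<forall>\<alpha>\<in>Field r. underS r \<alpha> = {} \<longrightarrow> X \<alpha> = {}) \<and>
     (\<forall>\<alpha>\<in>Field r. \<forall>\<beta>\<in>Field r. underS r \<alpha> = under r \<beta> \<longrightarrow>
        X \<alpha> = (if f (X \<beta>) - X \<beta> = {} then X \<beta>
                 else X \<beta> \<union> {least le (f (X \<beta>) - X \<beta>)})) \<and>
     (\<forall>\<alpha>\<in>Field r. underS r \<alpha> \<noteq> {} \<and> (\<forall>\<beta>\<in>Field r. underS r \<alpha> \<noteq> under r \<beta>) \<longrightarrow>
        X \<alpha> = (\<Union>\<beta>\<in>underS r \<alpha>. X \<beta>))"

end

theory Submission imports Defs begin

locale L =
  fixes P :: "'a set" and le :: "'a \<Rightarrow> 'a \<Rightarrow> bool" and f :: "'a set \<Rightarrow> 'a set"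
  assumes poset: "partial_order_on_set P le"
    and f_maps: "\<forall>X\<in>WO_sets P le. f X \<in> WO_sets P le"
    and f_cond: "\<forall>X\<in>WO_sets P le. \<forall>X'\<in>WO_sets P le. \<forall>y\<in>symdiff (f X) (f X').
                   \<exists>x\<in>symdiff X X'. strict le x y"
begin

abbreviation "WO \<equiv> WO_sets P le"

lemma refl: "x \<in> P \<Longrightarrow> le x x" using poset unfolding partial_order_on_set_def by blast
lemma antisym: "x \<in> P \<Longrightarrow> y \<in> P \<Longrightarrow> le x y \<Longrightarrow> le y x \<Longrightarrow> x = y"
  using poset unfolding partial_order_on_set_def by blast
lemma trans: "x \<in> P \<Longrightarrow> y \<in> P \<Longrightarrow> z \<in> P \<Longrightarrow> le x y \<Longrightarrow> le y z \<Longrightarrow> le x z"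
  using poset unfolding partial_order_on_set_def by blast

lemma WO_sub: "X \<in> WO \<Longrightarrow> X \<subseteq> P" unfolding WO_sets_def well_ordered_subset_def by blast
lemma WO_mono: "X \<in> WO \<Longrightarrow> Z \<subseteq> X \<Longrightarrow> Z \<in> WO"
  unfolding WO_sets_def well_ordered_subset_def by blast
lemma fWO: "X \<in> WO \<Longrightarrow> f X \<in> WO" using f_maps by blast

lemma least_ex: assumes "X \<in> WO" "S \<subseteq> X" "S \<noteq> {}"
  shows "least le S \<in> S" "\<And>z. z \<in> S \<Longrightarrow> le (least le S) z"
proof -
  obtain m where m: "is_least le S m" using assms unfolding WO_sets_def well_ordered_subset_def by blast
  have SP: "S \<subseteq> P" using assms WO_sub by blast
  have "is_least le S (least le S)" unfolding least_def
  proof (rule theI[of _ m])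
    show "is_least le S m" by fact
    fix m' assume "is_least le S m'" thus "m' = m" using m SP antisym[of m' m] unfolding is_least_def by blast
  qed
  thus "least le S \<in> S" "\<And>z. z \<in> S \<Longrightarrow> le (least le S) z" unfolding is_least_def by auto
qed

lemma chain: assumes "X \<in> WO" "x \<in> X" "y \<in> X" shows "le x y \<or> le y x"
proof -
  have h: "least le {x,y} \<in> {x,y}" "\<And>z. z \<in> {x,y} \<Longrightarrow> le (least le {x,y}) z"
    using least_ex[OF assms(1), of "{x,y}"] assms by auto
  show ?thesis
  proof (cases "least le {x,y} = x")
    case True thus ?thesis using h(2)[of y] by auto
  next
    case False hence "least le {x,y} = y" using h(1) by auto
    thus ?thesis using h(2)[of x] by auto
  qed
qed

lemma fc: assumes "X \<in> WO" "X' \<in> WO" "y \<in> f X" "y \<notin> f X'"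
  shows "\<exists>x. ((x \<in> X \<and> x \<notin> X') \<or> (x \<in> X' \<and> x \<notin> X)) \<and> le x y \<and> x \<noteq> y"
  using f_cond assms unfolding symdiff_def strict_def by blast

lemma lemA: assumes "A \<in> WO" "B \<in> WO" "S \<subseteq> A \<union> B" "\<forall>y\<in>S. \<exists>x\<in>S. le x y \<and> x \<noteq> y"
  shows "S = {}"
proof (rule ccontr)
  assume ne: "S \<noteq> {}"
  have AP: "A \<subseteq> P" "B \<subseteq> P" using assms WO_sub by auto
  show False
  proof (cases "S \<inter> A = {}")
    case True
    hence "S \<inter> B \<noteq> {}" using ne assms(3) by blast
    let ?m = "least le (S \<inter> B)"
    have m: "?m \<in> S \<inter> B" "\<And>z. z \<in> S \<inter> B \<Longrightarrow> le ?m z" using least_ex[OF assms(2), of "S \<inter> B"] \<open>S \<inter> B \<noteq> {}\<close> by auto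
    obtain x where x: "x \<in> S" "le x ?m" "x \<noteq> ?m" using assms(4) m by blast
    have "x \<in> B" using x True assms(3) by blast
    thus False using m x antisym[of x ?m] AP by blast
  next
    case False
    let ?m = "least le (S \<inter> A)"
    have m: "?m \<in> S \<inter> A" "\<And>z. z \<in> S \<inter> A \<Longrightarrow> le ?m z" using least_ex[OF assms(1), of "S \<inter> A"] False by auto
    obtain x where x: "x \<in> S" "le x ?m" "x \<noteq> ?m" using assms(4) m by blast
    have xA: "x \<notin> A" using m x antisym[of x ?m] AP by blast
    hence xB: "x \<in> S \<inter> B" using x assms(3) by blast
    let ?n = "least le (S \<inter> B)"
    have n: "?n \<in> S \<inter> B" "\<And>z. z \<in> S \<inter> B \<Longrightarrow> le ?n z" using least_ex[OF assms(2), of "S \<inter> B"] xB by auto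
    obtain x' where x': "x' \<in> S" "le x' ?n" "x' \<noteq> ?n" using assms(4) n by blast
    have "x' \<notin> B" using n x' antisym[of x' ?n] AP by blast
    hence "x' \<in> S \<inter> A" using x' assms(3) by blast
    hence "le ?m x'" using m by blast
    have P: "?m \<in> P" "x \<in> P" "?n \<in> P" "x' \<in> P" using m xB n x' assms(3) AP by auto
    have "le ?n x" using n xB by blast
    have "le ?m x" using trans[of ?m x' ?n] trans[of ?m ?n x] P \<open>le ?m x'\<close> x'(2) \<open>le ?n x\<close> by meson
    thus False using antisym[of x ?m] P x by blast
  qed
qed

lemma uniq: assumes "Y \<in> WO" "Z \<in> WO" "f Y = Y" "f Z = Z" shows "Y = Z"
proof -
  have "symdiff Y Z = {}"
  proof (rule lemA[OF assms(1,2)])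
    show "symdiff Y Z \<subseteq> Y \<union> Z" unfolding symdiff_def by blast
    show "\<forall>y\<in>symdiff Y Z. \<exists>x\<in>symdiff Y Z. le x y \<and> x \<noteq> y"
      using f_cond assms unfolding strict_def by metis
  qed
  thus ?thesis unfolding symdiff_def by blast
qed

definition good where "good X \<longleftrightarrow> X \<in> WO \<and> X \<subseteq> f X \<and> (\<forall>y\<in>f X. \<forall>x\<in>X. le y x \<longrightarrow> y \<in> X)"

lemma good_WO: "good X \<Longrightarrow> X \<in> WO" unfolding good_def by blast
lemma good_fWO: "good X \<Longrightarrow> f X \<in> WO" unfolding good_def using fWO by blast
lemma good_sub: "good X \<Longrightarrow> X \<subseteq> f X" unfolding good_def by blast
lemma good_dc: "good X \<Longrightarrow> y \<in> f X \<Longrightarrow> x \<in> X \<Longrightarrow> le y x \<Longrightarrow> y \<in> X" unfolding good_def by blast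

lemma good_empty: "good {}"
proof -
  have "{} \<in> WO" unfolding WO_sets_def well_ordered_subset_def by auto
  thus ?thesis unfolding good_def by auto
qed

lemma D: assumes "good X" "a \<in> f X" "a \<notin> X" "x \<in> X" shows "le x a" "x \<noteq> a"
proof -
  have "f X \<in> WO" by (rule good_fWO[OF assms(1)])
  moreover have "x \<in> f X" using good_sub[OF assms(1)] assms(4) by blast
  ultimately have "le x a \<or> le a x" using chain assms by blast
  thus "le x a" using good_dc[OF assms(1) assms(2) assms(4)] assms(3) by blast
  show "x \<noteq> a" using assms by blast
qed

lemma above: assumes "good X" "good X'" "X \<subseteq> X'" "a \<in> X' - X" "x \<in> X"
  shows "le x a" "x \<noteq> a"
proof -
  have W: "X \<in> WO" "X' \<in> WO" using good_WO[OF assms(1)] good_WO[OF assms(2)] by auto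
  let ?a = "least le (X' - X)"
  have a0: "?a \<in> X' - X" "\<And>z. z \<in> X' - X \<Longrightarrow> le ?a z" using least_ex[OF W(2), of "X' - X"] assms by auto
  have PP: "X' \<subseteq> P" using WO_sub[OF W(2)] by auto
  have "?a \<in> f X"
  proof (rule ccontr)
    assume "?a \<notin> f X"
    moreover have "?a \<in> f X'" using a0 good_sub[OF assms(2)] by blast
    ultimately obtain x' where "x' \<in> X' - X" "le x' ?a" "x' \<noteq> ?a"
      using fc[OF W(2,1)] assms(3) by blast
    thus False using a0 antisym[of x' ?a] PP by blast
  qed
  hence "le x ?a" "x \<noteq> ?a" using D(1)[OF assms(1) _ _ assms(5)] a0 assms(5) by blast+
  moreover have "le ?a a" using a0 assms by blast
  ultimately show "le x a" using trans[of x ?a a] PP assms a0 by blast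
  show "x \<noteq> a" using assms by blast
qed

lemma comp_aux1: assumes "good X" "good X'" "X - X' \<noteq> {}" "X' - X \<noteq> {}"
  "least le (X - X') \<notin> f X'"
  shows "le (least le (X' - X)) (least le (X - X'))" "least le (X' - X) \<noteq> least le (X - X')"
proof -
  have W: "X \<in> WO" "X' \<in> WO" using good_WO[OF assms(1)] good_WO[OF assms(2)] by auto
  let ?a = "least le (X - X')" and ?b = "least le (X' - X)"
  have a: "?a \<in> X - X'" "\<And>z. z \<in> X - X' \<Longrightarrow> le ?a z" using least_ex[OF W(1), of "X - X'"] assms by auto
  have b: "?b \<in> X' - X" "\<And>z. z \<in> X' - X \<Longrightarrow> le ?b z" using least_ex[OF W(2), of "X' - X"] assms by auto
  have PP: "X \<subseteq> P" "X' \<subseteq> P" using WO_sub[OF W(1)] WO_sub[OF W(2)] by auto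
  have ab: "?a \<notin> X'" "?b \<in> X'" "?b \<notin> X" "?a \<in> X" using a(1) b(1) by auto
  have abP: "?a \<in> P" "?b \<in> P" using ab PP by auto
  have "?a \<in> f X" using ab(4) good_sub[OF assms(1)] by blast
  then obtain x where x: "(x \<in> X \<and> x \<notin> X') \<or> (x \<in> X' \<and> x \<notin> X)" "le x ?a" "x \<noteq> ?a"
    using fc[OF W] assms(5) by blast
  have xP: "x \<in> P" using x(1) PP by blast
  have "x \<in> X' - X"
  proof (rule ccontr)
    assume "x \<notin> X' - X"
    hence "x \<in> X - X'" using x(1) by blast
    hence "le ?a x" by (rule a(2))
    thus False using antisym[OF xP abP(1) x(2)] x(3) by simp
  qed
  hence "le ?b x" by (rule b(2))
  thus "le ?b ?a" using trans[OF abP(2) xP abP(1)] x(2) by simp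
  show "?b \<noteq> ?a" using ab by auto
qed

lemma comp_aux2: assumes "good X" "good X'" "X - X' \<noteq> {}" "X' - X \<noteq> {}"
  "least le (X - X') \<in> f X'" shows False
proof -
  have W: "X \<in> WO" "X' \<in> WO" using good_WO[OF assms(1)] good_WO[OF assms(2)] by auto
  let ?a = "least le (X - X')" and ?b = "least le (X' - X)"
  have a: "?a \<in> X - X'" "\<And>z. z \<in> X - X' \<Longrightarrow> le ?a z" using least_ex[OF W(1), of "X - X'"] assms by auto
  have b: "?b \<in> X' - X" "\<And>z. z \<in> X' - X \<Longrightarrow> le ?b z" using least_ex[OF W(2), of "X' - X"] assms by auto
  have PP: "X \<subseteq> P" "X' \<subseteq> P" using WO_sub[OF W(1)] WO_sub[OF W(2)] by auto
  have ab: "?a \<notin> X'" "?b \<in> X'" "?b \<notin> X" "?a \<in> X" using a(1) b(1) by auto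
  have abP: "?a \<in> P" "?b \<in> P" using ab PP by auto
  have ba: "le ?b ?a" "?b \<noteq> ?a" using D(1)[OF assms(2) assms(5) ab(1,2)] ab by auto
  have "?b \<in> f X"
  proof (rule ccontr)
    assume "?b \<notin> f X"
    moreover have "?b \<in> f X'" using ab(2) good_sub[OF assms(2)] by blast
    ultimately obtain x where x: "(x \<in> X' \<and> x \<notin> X) \<or> (x \<in> X \<and> x \<notin> X')" "le x ?b" "x \<noteq> ?b"
      using fc[OF W(2,1)] by blast
    have xP: "x \<in> P" using x(1) PP by blast
    show False
    proof (cases "x \<in> X' - X")
      case True
      hence "le ?b x" by (rule b(2))
      thus False using antisym[OF xP abP(2) x(2)] x(3) by simp
    next
      case False
      hence "x \<in> X - X'" using x by blast
      hence "le ?a x" by (rule a(2))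
      hence "le ?a ?b" using trans[OF abP(1) xP abP(2)] x(2) by simp
      thus False using antisym[OF abP(1) abP(2)] ba by simp
    qed
  qed
  hence "le ?a ?b" using D(1)[OF assms(1) _ ab(3,4)] by blast
  thus False using antisym[OF abP(1) abP(2)] ba by simp
qed

lemma comp: assumes "good X" "good X'" shows "X \<subseteq> X' \<or> X' \<subseteq> X"
proof (rule ccontr)
  assume "\<not> ?thesis"
  hence ne: "X - X' \<noteq> {}" "X' - X \<noteq> {}" by auto
  have "least le (X - X') \<in> f X' \<or> least le (X' - X) \<in> f X"
  proof (rule ccontr)
    assume "\<not> ?thesis"
    hence "le (least le (X' - X)) (least le (X - X'))" "least le (X' - X) \<noteq> least le (X - X')"
      "le (least le (X - X')) (least le (X' - X))"
      using comp_aux1[OF assms ne] comp_aux1[OF assms(2,1) ne(2,1)] by auto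
    moreover have "least le (X - X') \<in> P" "least le (X' - X) \<in> P"
      using least_ex(1)[OF good_WO[OF assms(1)], of "X - X'"] least_ex(1)[OF good_WO[OF assms(2)], of "X' - X"] ne WO_sub[OF good_WO[OF assms(1)]] WO_sub[OF good_WO[OF assms(2)]]
      by blast+
    ultimately show False using antisym[of "least le (X - X')" "least le (X' - X)"] by auto
  qed
  thus False using comp_aux2[OF assms ne] comp_aux2[OF assms(2,1) ne(2,1)] by blast
qed

lemma lemL: assumes "good X" "Y \<in> WO" "X \<subseteq> Y" "\<forall>z\<in>Y-X. \<forall>x\<in>X. le x z \<and> x \<noteq> z"
  shows "X \<subseteq> f Y" "\<forall>y\<in>f Y. \<forall>x\<in>X. le y x \<longrightarrow> y \<in> X"
proof -
  have W: "X \<in> WO" using good_WO[OF assms(1)] .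
  have PP: "Y \<subseteq> P" "f Y \<subseteq> P" using WO_sub[OF assms(2)] WO_sub[OF fWO[OF assms(2)]] by auto
  show "X \<subseteq> f Y"
  proof
    fix x assume x: "x \<in> X"
    show "x \<in> f Y"
    proof (rule ccontr)
      assume "x \<notin> f Y"
      moreover have "x \<in> f X" using good_sub[OF assms(1)] x by blast
      ultimately obtain z where z: "z \<in> Y - X" "le z x" "z \<noteq> x" using fc[OF W assms(2)] assms(3) by blast
      thus False using assms(4) x antisym[of z x] PP assms(3) by blast
    qed
  qed
  show "\<forall>y\<in>f Y. \<forall>x\<in>X. le y x \<longrightarrow> y \<in> X"
  proof (intro ballI impI)
    fix y x assume yx: "y \<in> f Y" "x \<in> X" "le y x"
    show "y \<in> X"
    proof (cases "y \<in> f X")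
      case True show ?thesis using good_dc[OF assms(1) True yx(2,3)] .
    next
      case False
      then obtain z where z: "z \<in> Y - X" "le z y" "z \<noteq> y" using fc[OF assms(2) W yx(1)] assms(3) by blast
      have "le z x" using trans[of z y x] z yx PP assms(3) by blast
      moreover have "le x z" "x \<noteq> z" using assms(4) z yx by auto
      ultimately show ?thesis using antisym[of x z] PP z yx assms(3) by blast
    qed
  qed
qed

lemma union_good: assumes "\<forall>X\<in>F. good X" shows "good (\<Union>F)"
proof -
  let ?U = "\<Union>F"
  have UP: "?U \<subseteq> P" using assms WO_sub good_WO by blast
  have UW: "?U \<in> WO" unfolding WO_sets_def well_ordered_subset_def
  proof (intro CollectI conjI allI impI)
    show "?U \<subseteq> P" by fact
    fix S assume S: "S \<subseteq> ?U \<and> S \<noteq> {}"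
    then obtain s X where sX: "s \<in> S" "s \<in> X" "X \<in> F" by blast
    have XW: "X \<in> WO" using assms sX good_WO by blast
    let ?m = "least le (S \<inter> X)"
    have m: "?m \<in> S \<inter> X" "\<And>z. z \<in> S \<inter> X \<Longrightarrow> le ?m z" using least_ex[OF XW, of "S \<inter> X"] sX by auto
    have "is_least le S ?m" unfolding is_least_def
    proof (intro conjI ballI)
      show "?m \<in> S" using m by blast
      fix z assume z: "z \<in> S"
      then obtain X'' where X'': "z \<in> X''" "X'' \<in> F" using S by blast
      show "le ?m z"
      proof (cases "z \<in> X")
        case True thus ?thesis using m z by blast
      next
        case False
        hence "X \<subseteq> X''" using comp assms X'' sX by blast
        thus ?thesis using above[of X X'' z ?m] assms sX X'' False m by blast
      qed
    qed
    thus "\<exists>m. is_least le S m" by blast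
  qed
  have L: "X \<subseteq> f ?U \<and> (\<forall>y\<in>f ?U. \<forall>x\<in>X. le y x \<longrightarrow> y \<in> X)" if X: "X \<in> F" for X
  proof -
    have "\<forall>z\<in>?U-X. \<forall>x\<in>X. le x z \<and> x \<noteq> z"
    proof (intro ballI)
      fix z x assume z: "z \<in> ?U - X" and x: "x \<in> X"
      then obtain X'' where X'': "z \<in> X''" "X'' \<in> F" by blast
      hence "X \<subseteq> X''" using comp assms X z by blast
      thus "le x z \<and> x \<noteq> z" using above[of X X'' z x] assms X X'' z x by blast
    qed
    thus ?thesis using lemL[of X ?U] assms X UW by blast
  qed
  show ?thesis unfolding good_def using UW L by blast
qed

lemma succ_good: assumes "good X" "f X - X \<noteq> {}" shows "good (X \<union> {least le (f X - X)})"
proof -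
  let ?m = "least le (f X - X)"
  let ?X' = "X \<union> {?m}"
  have W: "X \<in> WO" "f X \<in> WO" using good_WO[OF assms(1)] fWO[OF good_WO[OF assms(1)]] by auto
  have m: "?m \<in> f X - X" "\<And>z. z \<in> f X - X \<Longrightarrow> le ?m z" using least_ex[OF W(2), of "f X - X"] assms by auto
  have XfX: "X \<subseteq> f X" using good_sub[OF assms(1)] .
  have W': "?X' \<in> WO" by (rule WO_mono[OF W(2)]) (use m XfX in blast)
  have PP: "f X \<subseteq> P" "f ?X' \<subseteq> P" using WO_sub[OF W(2)] WO_sub[OF fWO[OF W']] by auto
  have below: "le x ?m" "x \<noteq> ?m" if "x \<in> X" for x using D(1)[OF assms(1) _ _ that] m that by blast+
  have C1: "y \<in> f ?X'" if yy: "y \<in> f X" "le y ?m" for y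
  proof (rule ccontr)
    assume "y \<notin> f ?X'"
    then obtain x where "(x \<in> X \<and> x \<notin> ?X') \<or> (x \<in> ?X' \<and> x \<notin> X)" "le x y" "x \<noteq> y"
      using fc[OF W(1) W' yy(1)] by blast
    hence "x = ?m" "le ?m y" "?m \<noteq> y" by auto
    thus False using antisym[of ?m y] PP yy m by blast
  qed
  have C2: "y \<in> f X" if yy: "y \<in> f ?X'" "le y ?m" for y
  proof (rule ccontr)
    assume "y \<notin> f X"
    then obtain x where "(x \<in> ?X' \<and> x \<notin> X) \<or> (x \<in> X \<and> x \<notin> ?X')" "le x y" "x \<noteq> y"
      using fc[OF W' W(1) yy(1)] by blast
    hence "x = ?m" "le ?m y" "?m \<noteq> y" by auto
    thus False using antisym[of ?m y] PP yy m by blast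
  qed
  have "?X' \<subseteq> f ?X'"
  proof
    fix x assume "x \<in> ?X'"
    moreover have "le ?m ?m" using refl PP m by blast
    ultimately show "x \<in> f ?X'" using C1 below m XfX by blast
  qed
  moreover have "\<forall>y\<in>f ?X'. \<forall>x\<in>?X'. le y x \<longrightarrow> y \<in> ?X'"
  proof (intro ballI impI)
    fix y x assume yx: "y \<in> f ?X'" "x \<in> ?X'" "le y x"
    have "le x ?m" using yx below refl PP m by blast
    hence ym: "le y ?m" using trans[of y x ?m] PP yx m \<open>?X' \<subseteq> f ?X'\<close> by blast
    hence yf: "y \<in> f X" using C2 yx by blast
    show "y \<in> ?X'"
    proof (cases "y = ?m")
      case False
      show ?thesis
      proof (rule ccontr)
        assume "y \<notin> ?X'"
        hence "le ?m y" using m yf by blast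
        thus False using antisym[of y ?m] PP ym False yf m by blast
      qed
    qed simp
  qed
  ultimately show ?thesis using W' unfolding good_def by blast
qed


definition "Yf = \<Union>{X. good X}"
definition "rr = {(A,B). good A \<and> good B \<and> A \<subseteq> B}"

lemma Y_good: "good Yf" unfolding Yf_def by (rule union_good) blast
lemma good_le_Y: "good X \<Longrightarrow> X \<subseteq> Yf" unfolding Yf_def by blast

lemma Y_fix: "f Yf = Yf"
proof -
  have "f Yf - Yf = {}"
  proof (rule ccontr)
    assume ne: "f Yf - Yf \<noteq> {}"
    have W: "f Yf \<in> WO" by (rule good_fWO[OF Y_good])
    have m: "least le (f Yf - Yf) \<in> f Yf - Yf" using least_ex(1)[OF W, of "f Yf - Yf"] ne by blast
    have "good (Yf \<union> {least le (f Yf - Yf)})" by (rule succ_good[OF Y_good ne])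
    hence "least le (f Yf - Yf) \<in> Yf" using good_le_Y by blast
    thus False using m by blast
  qed
  thus ?thesis using good_sub[OF Y_good] by blast
qed

lemma fix_unique: "Z \<in> WO \<Longrightarrow> f Z = Z \<Longrightarrow> Z = Yf"
  using uniq[OF _ good_WO[OF Y_good] _ Y_fix] by blast

lemma Field_rr: "Field rr = {X. good X}"
  unfolding rr_def Field_def by auto

lemma rr_least: assumes A: "A \<subseteq> {X. good X}" "A \<noteq> {}"
  shows "\<exists>a\<in>A. \<forall>a'\<in>A. (a, a') \<in> rr"
proof (cases "A \<subseteq> {Yf}")
  case True
  hence "A = {Yf}" using A by blast
  thus ?thesis using Y_good unfolding rr_def by auto
next
  case False
  then obtain X0 where X0: "X0 \<in> A" "X0 \<noteq> Yf" by blast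
  have YW: "Yf \<in> WO" by (rule good_WO[OF Y_good])
  have YP: "Yf \<subseteq> P" by (rule WO_sub[OF YW])
  let ?T = "{least le (Yf - X) | X. X \<in> A \<and> X \<noteq> Yf}"
  have lYX: "least le (Yf - X) \<in> Yf - X" "\<And>z. z \<in> Yf - X \<Longrightarrow> le (least le (Yf - X)) z"
    if "X \<in> A" "X \<noteq> Yf" for X
  proof -
    have "X \<subseteq> Yf" using good_le_Y that A by blast
    hence "Yf - X \<noteq> {}" using that by blast
    thus "least le (Yf - X) \<in> Yf - X" "\<And>z. z \<in> Yf - X \<Longrightarrow> le (least le (Yf - X)) z"
      using least_ex[OF YW, of "Yf - X"] by auto
  qed
  have TY: "?T \<subseteq> Yf" using lYX by blast
  have Tne: "?T \<noteq> {}" using X0 by blast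
  have t: "least le ?T \<in> ?T" "\<And>z. z \<in> ?T \<Longrightarrow> le (least le ?T) z"
    using least_ex[OF YW TY Tne] by auto
  then obtain X1 where X1: "X1 \<in> A" "X1 \<noteq> Yf" "least le ?T = least le (Yf - X1)" by blast
  define t where "t = least le ?T"
  have tX1: "t \<in> Yf - X1" using lYX(1)[OF X1(1,2)] X1(3) unfolding t_def by simp
  have g1: "good X1" using X1 A by blast
  have "\<forall>X\<in>A. X1 \<subseteq> X"
  proof
    fix X assume XA: "X \<in> A"
    have gX: "good X" using XA A by blast
    show "X1 \<subseteq> X"
    proof (rule ccontr)
      assume nX: "\<not> X1 \<subseteq> X"
      then obtain e where e: "e \<in> X1" "e \<notin> X" by blast
      have XX1: "X \<subseteq> X1" using comp[OF g1 gX] nX by blast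
      have XY: "X \<noteq> Yf" using XX1 good_le_Y[OF g1] X1(2) by blast
      have eY: "e \<in> Yf" using e good_le_Y[OF g1] by blast
      have t'T: "least le (Yf - X) \<in> ?T" using XA XY by blast
      have "le t (least le (Yf - X))" unfolding t_def by (rule t(2)[OF t'T])
      moreover have "le (least le (Yf - X)) e" using lYX(2)[OF XA XY] e eY by blast
      moreover have "le e t" "e \<noteq> t" using above[OF g1 Y_good good_le_Y[OF g1] tX1 e(1)] by auto
      moreover have "t \<in> P" "e \<in> P" "least le (Yf - X) \<in> P" using tX1 eY lYX(1)[OF XA XY] YP by auto
      ultimately show False using trans[of t "least le (Yf - X)" e] antisym[of e t] by auto
    qed
  qed
  thus ?thesis using X1(1) g1 A unfolding rr_def by blast
qed

lemma rr_WO: "Well_order rr"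
proof -
  have L: "Linear_order rr"
    unfolding Field_rr linear_order_on_def partial_order_on_def preorder_on_def refl_on_def
      trans_def antisym_def total_on_def
    using comp unfolding rr_def by blast
  show ?thesis
    using Linear_order_Well_order_iff[OF L] rr_least unfolding Field_rr by blast
qed

lemma mem_under: "\<beta> \<in> under rr \<gamma> \<longleftrightarrow> good \<beta> \<and> good \<gamma> \<and> \<beta> \<subseteq> \<gamma>"
  unfolding under_def rr_def by simp
lemma mem_underS: "\<beta> \<in> underS rr \<gamma> \<longleftrightarrow> good \<beta> \<and> good \<gamma> \<and> \<beta> \<subseteq> \<gamma> \<and> \<beta> \<noteq> \<gamma>"
  unfolding underS_def rr_def by auto

lemma iteration: "is_iteration le f rr id"
  unfolding is_iteration_def
proof (intro conjI ballI impI)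
  show "Well_order rr" by (rule rr_WO)
next
  fix \<alpha> assume a: "\<alpha> \<in> Field rr" "underS rr \<alpha> = {}"
  have ga: "good \<alpha>" using a Field_rr by blast
  show "id \<alpha> = {}"
  proof (rule ccontr)
    assume "id \<alpha> \<noteq> {}"
    hence "{} \<in> underS rr \<alpha>" using good_empty ga mem_underS by auto
    thus False using a by simp
  qed
next
  fix \<alpha> \<beta> assume a: "\<alpha> \<in> Field rr" "\<beta> \<in> Field rr" "underS rr \<alpha> = under rr \<beta>"
  have ga: "good \<alpha>" and gb: "good \<beta>" using a Field_rr by auto
  have "\<beta> \<in> under rr \<beta>" using gb mem_under by simp
  hence "\<beta> \<in> underS rr \<alpha>" using a(3) by simp
  hence ba: "\<beta> \<subseteq> \<alpha>" "\<beta> \<noteq> \<alpha>" using mem_underS by auto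
  show "id \<alpha> = (if f (id \<beta>) - id \<beta> = {} then id \<beta> else id \<beta> \<union> {least le (f (id \<beta>) - id \<beta>)})"
  proof (cases "f \<beta> - \<beta> = {}")
    case True
    hence "f \<beta> = \<beta>" using good_sub[OF gb] by blast
    hence "\<beta> = Yf" using fix_unique good_WO[OF gb] by blast
    hence False using ba good_le_Y[OF ga] by blast
    thus ?thesis ..
  next
    case False
    let ?m = "least le (f \<beta> - \<beta>)"
    have m: "?m \<in> f \<beta> - \<beta>" using least_ex(1)[OF good_fWO[OF gb], of "f \<beta> - \<beta>"] False by blast
    have gs: "good (\<beta> \<union> {?m})" by (rule succ_good[OF gb False])
    have "\<alpha> = \<beta> \<union> {?m}"
    proof (cases "\<alpha> \<subseteq> \<beta> \<union> {?m}")
      case True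
      thus ?thesis using ba by blast
    next
      case nF: False
      hence sub: "\<beta> \<union> {?m} \<subseteq> \<alpha>" using comp[OF ga gs] by blast
      have ne: "\<beta> \<union> {?m} \<noteq> \<alpha>" using nF by blast
      have "\<beta> \<union> {?m} \<in> underS rr \<alpha>" using mem_underS gs ga sub ne by simp
      hence "\<beta> \<union> {?m} \<in> under rr \<beta>" using a(3) by simp
      hence "\<beta> \<union> {?m} \<subseteq> \<beta>" using mem_under by simp
      thus ?thesis using m by blast
    qed
    thus ?thesis using False by simp
  qed
next
  fix \<alpha> assume a: "\<alpha> \<in> Field rr" "underS rr \<alpha> \<noteq> {} \<and> (\<forall>\<beta>\<in>Field rr. underS rr \<alpha> \<noteq> under rr \<beta>)"
  have ga: "good \<alpha>" using a Field_rr by blast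
  let ?F = "underS rr \<alpha>"
  have F: "\<And>\<beta>. \<beta> \<in> ?F \<longleftrightarrow> good \<beta> \<and> \<beta> \<subseteq> \<alpha> \<and> \<beta> \<noteq> \<alpha>" using mem_underS ga by simp
  have gU: "good (\<Union>?F)" by (rule union_good) (use F in blast)
  have Usub: "\<Union>?F \<subseteq> \<alpha>" using F by blast
  show "id \<alpha> = (\<Union>\<beta>\<in>?F. id \<beta>)"
  proof (rule ccontr)
    assume "id \<alpha> \<noteq> (\<Union>\<beta>\<in>?F. id \<beta>)"
    hence ne: "\<Union>?F \<noteq> \<alpha>" by simp
    have "?F = under rr (\<Union>?F)"
    proof (rule set_eqI)
      fix \<beta>
      show "\<beta> \<in> ?F \<longleftrightarrow> \<beta> \<in> under rr (\<Union>?F)"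
      proof
        assume "\<beta> \<in> ?F"
        hence "good \<beta>" "\<beta> \<subseteq> \<Union>?F" using F by blast+
        thus "\<beta> \<in> under rr (\<Union>?F)" using mem_under gU by simp
      next
        assume "\<beta> \<in> under rr (\<Union>?F)"
        hence "good \<beta>" "\<beta> \<subseteq> \<Union>?F" using mem_under by simp_all
        moreover hence "\<beta> \<subseteq> \<alpha>" "\<beta> \<noteq> \<alpha>" using Usub ne by blast+
        ultimately show "\<beta> \<in> ?F" using F by simp
      qed
    qed
    moreover have "\<Union>?F \<in> Field rr" using gU Field_rr by blast
    ultimately show False using a by blast
  qed
qed

lemma main: "\<exists>Y. Y \<in> WO_sets P le \<and> f Y = Y \<and>
           (\<forall>Z\<in>WO_sets P le. f Z = Z \<longrightarrow> Z = Y) \<and>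
           (\<exists>(r :: 'a set rel) X. is_iteration le f r X \<and> (\<exists>\<alpha>\<in>Field r. X \<alpha> = Y))"
proof (rule exI[of _ Yf], intro conjI ballI impI)
  show "Yf \<in> WO_sets P le" by (rule good_WO[OF Y_good])
  show "f Yf = Yf" by (rule Y_fix)
  show "\<And>Z. Z \<in> WO_sets P le \<Longrightarrow> f Z = Z \<Longrightarrow> Z = Yf" by (rule fix_unique)
  have "Yf \<in> Field rr" using Y_good Field_rr by blast
  thus "\<exists>(r :: 'a set rel) X. is_iteration le f r X \<and> (\<exists>\<alpha>\<in>Field r. X \<alpha> = Yf)"
    using iteration by fastforce
qed

end

theorem theorem6p2:
  fixes P :: "'a set" and le :: "'a \<Rightarrow> 'a \<Rightarrow> bool" and f :: "'a set \<Rightarrow> 'a set"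
  assumes poset: "partial_order_on_set P le"
    and f_maps: "\<forall>X\<in>WO_sets P le. f X \<in> WO_sets P le"
    and f_cond: "\<forall>X\<in>WO_sets P le. \<forall>X'\<in>WO_sets P le. \<forall>y\<in>symdiff (f X) (f X').
                   \<exists>x\<in>symdiff X X'. strict le x y"
  shows "\<exists>Y. Y \<in> WO_sets P le \<and> f Y = Y \<and>
           (\<forall>Z\<in>WO_sets P le. f Z = Z \<longrightarrow> Z = Y) \<and>
           (\<exists>(r :: 'a set rel) X. is_iteration le f r X \<and> (\<exists>\<alpha>\<in>Field r. X \<alpha> = Y))"
proof -
  interpret L P le f using assms by unfold_locales
  show ?thesis by (rule main)
qed

end
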